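(* Let $p'$ be a joint distribution of two binary random variables $(D,E)$ with $p'(E=1)>0$ and $p'(E=0)>0$, and let $M',m'$ be real numbers in the feasible region for $p'$, i.e. $\max_{e\in\{0,1\}} p'(D=1\mid E=e)\le M'\le 1$ and $0\le m'\le \min_{e\in\{0,1\}} p'(D=1\mid E=e)$. Then for every $\delta>0$ there exists a joint distribution $p(D,E,U)$, with $D,E$ binary and $U$ categorical (finitely many values), satisfying positivity (i.e. $p(U=u)>0$ implies $p(E=e\mid U=u)>0$ for both $e\in\{0,1\}$), such that, writing $M=\max_{e,u} p(D=1\mid E=e,U=u)$ and $m=\min_{e,u}p(D=1\mid E=e,U=u)$ (over $e\in\{0,1\}$ and $u$ with $p(U=u)>0$): (i) $|M-M'|<\delta$, $|m-m'|<\delta$, and $|p(D=d,E=e)-p'(D=d,E=e)|<\delta$ for all $d,e\in\{0,1\}$; and (ii) simultaneously, $$\bigl|\,p(D_1=1)-\bigl[p(D=1,E=1)+p(E=0)\,M\bigr]\bigr|<\delta \quad\text{and}\quad \bigl|\,p(D_0=1)-\bigl[p(D=1,E=0)+p(E=1)\,m\bigr]\bigr|<\delta,$$ where $p(D_e=1)=\sum_u p(D=1\mid E=e,U=u)\,p(U=u)$ is the counterfactual probability of the outcome under exposure level $e$.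
   Context: Setting: $E$ (exposure) and $D$ (outcome) are binary, $U$ is an unmeasured categorical confounder, and the causal structure is the graph $U\to E$, $U\to D$, $E\to D$, interpreted as a non-parametric structural equation model with independent errors. $D_e$ denotes the counterfactual outcome when the exposure is set to $E=e$; under this model (counterfactual consistency and $D_e\perp E\mid U$) one has $p(D_e=1)=\sum_u p(D=1\mid E=e,U=u)p(U=u)$. The sensitivity parameters are $M=\max_{e,u}p(D=1\mid E=e,U=u)$ and $m=\min_{e,u}p(D=1\mid E=e,U=u)$. For any such model one has the bounds $p(D=1,E=e)+p(E=1-e)\,m\le p(D_e=1)\le p(D=1,E=e)+p(E=1-e)\,M$; the theorem says the upper bound for $p(D_1=1)$ and the lower bound for $p(D_0=1)$ are simultaneously arbitrarily sharp. *)

theory Defs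
  imports "HOL-Probability.Probability"
begin

definition obsDE :: "(bool \<times> bool) pmf \<Rightarrow> bool \<Rightarrow> bool \<Rightarrow> real" where
  "obsDE q d e = pmf q (d, e)"

definition obsE :: "(bool \<times> bool) pmf \<Rightarrow> bool \<Rightarrow> real" where
  "obsE q e = measure_pmf.prob q {x. snd x = e}"

definition obsCond :: "(bool \<times> bool) pmf \<Rightarrow> bool \<Rightarrow> real" where
  "obsCond q e = obsDE q True e / obsE q e"

definition pU :: "(bool \<times> bool \<times> nat) pmf \<Rightarrow> nat \<Rightarrow> real" where
  "pU p u = measure_pmf.prob p {x. snd (snd x) = u}"

definition pEU :: "(bool \<times> bool \<times> nat) pmf \<Rightarrow> bool \<Rightarrow> nat \<Rightarrow> real" where
  "pEU p e u = measure_pmf.prob p {x. fst (snd x) = e \<and> snd (snd x) = u}"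

definition pDE :: "(bool \<times> bool \<times> nat) pmf \<Rightarrow> bool \<Rightarrow> bool \<Rightarrow> real" where
  "pDE p d e = measure_pmf.prob p {x. fst x = d \<and> fst (snd x) = e}"

definition pE :: "(bool \<times> bool \<times> nat) pmf \<Rightarrow> bool \<Rightarrow> real" where
  "pE p e = measure_pmf.prob p {x. fst (snd x) = e}"

definition Usupp :: "(bool \<times> bool \<times> nat) pmf \<Rightarrow> nat set" where
  "Usupp p = {u. pU p u > 0}"

definition condD :: "(bool \<times> bool \<times> nat) pmf \<Rightarrow> bool \<Rightarrow> nat \<Rightarrow> real" where
  "condD p e u = pmf p (True, e, u) / pEU p e u"

definition positivity :: "(bool \<times> bool \<times> nat) pmf \<Rightarrow> bool" where
  "positivity p \<longleftrightarrow> (\<forall>u e. pU p u > 0 \<longrightarrow> pEU p e u / pU p u > 0)"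

definition sensM :: "(bool \<times> bool \<times> nat) pmf \<Rightarrow> real" where
  "sensM p = Max {condD p e u | e u. u \<in> Usupp p}"

definition sensm :: "(bool \<times> bool \<times> nat) pmf \<Rightarrow> real" where
  "sensm p = Min {condD p e u | e u. u \<in> Usupp p}"

definition pCF :: "(bool \<times> bool \<times> nat) pmf \<Rightarrow> bool \<Rightarrow> real" where
  "pCF p e = (\<Sum>u\<in>Usupp p. condD p e u * pU p u)"

end

theory Submission imports Defs begin

definition L :: "real \<Rightarrow> real \<Rightarrow> real \<Rightarrow> real \<Rightarrow> real \<Rightarrow> real \<Rightarrow> real \<Rightarrow> ((bool \<times> bool \<times> nat) \<times> real) list" where
 "L a b r1 r0 M m \<epsilon> =
   [((True,True,1), a*(1-\<epsilon>)*r1), ((False,True,1), a*(1-\<epsilon>)*(1-r1)),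
    ((True,False,1), a*\<epsilon>*m), ((False,False,1), a*\<epsilon>*(1-m)),
    ((True,False,0), b*(1-\<epsilon>)*r0), ((False,False,0), b*(1-\<epsilon>)*(1-r0)),
    ((True,True,0), b*\<epsilon>*M), ((False,True,0), b*\<epsilon>*(1-M))]"

lemma core:
  fixes a b r1 r0 M m \<epsilon> :: real
  assumes ab: "a > 0" "b > 0" "a + b = 1"
    and r: "0 \<le> m" "m \<le> r1" "m \<le> r0" "r1 \<le> M" "r0 \<le> M" "M \<le> 1"
    and e: "0 < \<epsilon>" "\<epsilon> < 1"
  defines "p \<equiv> pmf_of_list (L a b r1 r0 M m \<epsilon>)"
  shows "finite (set_pmf p) \<and> positivity p \<and> sensM p = M \<and> sensm p = m \<and>
    pDE p True True = a*(1-\<epsilon>)*r1 + b*\<epsilon>*M \<and>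
    pDE p False True = a*(1-\<epsilon>)*(1-r1) + b*\<epsilon>*(1-M) \<and>
    pDE p True False = a*\<epsilon>*m + b*(1-\<epsilon>)*r0 \<and>
    pDE p False False = a*\<epsilon>*(1-m) + b*(1-\<epsilon>)*(1-r0) \<and>
    pE p True = a*(1-\<epsilon>) + b*\<epsilon> \<and> pE p False = a*\<epsilon> + b*(1-\<epsilon>) \<and>
    pCF p True = b*M + a*r1 \<and> pCF p False = b*r0 + a*m"
proof -
  have nn: "0 \<le> a*(1-\<epsilon>)" "0 \<le> a*\<epsilon>" "0 \<le> b*(1-\<epsilon>)" "0 \<le> b*\<epsilon>" using ab e by auto
  have wf: "pmf_of_list_wf (L a b r1 r0 M m \<epsilon>)"
  proof (rule pmf_of_list_wfI)
    fix x assume "x \<in> set (map snd (L a b r1 r0 M m \<epsilon>))"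
    then show "0 \<le> x" using nn r by (auto simp: L_def intro!: mult_nonneg_nonneg)
  next
    have "sum_list (map snd (L a b r1 r0 M m \<epsilon>)) = a + b" by (simp add: L_def algebra_simps)
    then show "sum_list (map snd (L a b r1 r0 M m \<epsilon>)) = 1" using ab by simp
  qed
  have pr: "\<And>A. measure_pmf.prob p A = sum_list (map snd (filter (\<lambda>x. fst x \<in> A) (L a b r1 r0 M m \<epsilon>)))"
    unfolding p_def by (rule measure_pmf_of_list[OF wf])
  have pm: "\<And>x. pmf p x = sum_list (map snd (filter (\<lambda>z. fst z = x) (L a b r1 r0 M m \<epsilon>)))"
    unfolding p_def by (rule pmf_pmf_of_list[OF wf])
  have pU: "pU p u = (if u = 0 then b else if u = 1 then a else 0)" for u
    unfolding pU_def pr by (simp add: L_def algebra_simps)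
  have pEU: "pEU p e u = (if u = 0 then (if e then b*\<epsilon> else b*(1-\<epsilon>)) else if u = 1 then (if e then a*(1-\<epsilon>) else a*\<epsilon>) else 0)" for e u
    unfolding pEU_def pr by (cases e) (simp_all add: L_def algebra_simps)
  have Us: "Usupp p = {0,1}"
    using ab by (auto simp: Usupp_def pU split: if_splits)
  have cD: "condD p True 0 = M" "condD p False 0 = r0" "condD p True 1 = r1" "condD p False 1 = m"
    using ab e by (simp_all add: condD_def pm pEU L_def)
  have S: "{condD p e u | e u. u \<in> Usupp p} = {M, r0, r1, m}"
  proof -
    have "{condD p e u | e u. u \<in> Usupp p} = {condD p True 0, condD p False 0, condD p True 1, condD p False 1}"
      unfolding Us by (auto, (case_tac e, auto)+)
    then show ?thesis using cD by simp
  qed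
  have "sensM p = M" unfolding sensM_def S using r by (simp add: max_def)
  moreover have "sensm p = m" unfolding sensm_def S using r by (simp add: min_def)
  moreover have "positivity p"
    unfolding positivity_def pU pEU using ab e by auto
  moreover have "finite (set_pmf p)" unfolding p_def by (rule finite_set_pmf_of_list[OF wf])
  moreover have "pCF p True = b*M + a*r1" "pCF p False = b*r0 + a*m"
    unfolding pCF_def Us using cD by (simp_all add: pU)
  moreover have "pDE p True True = a*(1-\<epsilon>)*r1 + b*\<epsilon>*M"
    unfolding pDE_def pr by (simp add: L_def)
  moreover have "pDE p False True = a*(1-\<epsilon>)*(1-r1) + b*\<epsilon>*(1-M)"
    unfolding pDE_def pr by (simp add: L_def)
  moreover have "pDE p True False = a*\<epsilon>*m + b*(1-\<epsilon>)*r0"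
    unfolding pDE_def pr by (simp add: L_def)
  moreover have "pDE p False False = a*\<epsilon>*(1-m) + b*(1-\<epsilon>)*(1-r0)"
    unfolding pDE_def pr by (simp add: L_def)
  moreover have "pE p True = a*(1-\<epsilon>) + b*\<epsilon>"
    unfolding pE_def pr by (simp add: L_def algebra_simps)
  moreover have "pE p False = a*\<epsilon> + b*(1-\<epsilon>)"
    unfolding pE_def pr by (simp add: L_def algebra_simps)
  ultimately show ?thesis by blast
qed

lemma smallprod: "0 < (\<epsilon>::real) \<Longrightarrow> \<epsilon> < \<delta> \<Longrightarrow> \<bar>X\<bar> \<le> 1 \<Longrightarrow> \<bar>\<epsilon> * X\<bar> < \<delta>"
proof -
  assume h: "0 < \<epsilon>" "\<epsilon> < \<delta>" "\<bar>X\<bar> \<le> 1"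
  have "\<epsilon> * \<bar>X\<bar> \<le> \<epsilon>" using h mult_left_le[of "\<bar>X\<bar>" \<epsilon>] by simp
  moreover have "\<bar>\<epsilon> * X\<bar> = \<epsilon> * \<bar>X\<bar>" using h by (simp add: abs_mult)
  ultimately show ?thesis using h by linarith
qed

lemma obsE_eq: "obsE q e = pmf q (True, e) + pmf q (False, e)"
proof -
  have "{x. snd x = e} = {(True, e), (False, e)}" by auto
  then show ?thesis unfolding obsE_def by (simp add: measure_measure_pmf_finite)
qed

lemma obsE_sum: "obsE q True + obsE q False = 1"
proof -
  have se: "space (measure_pmf q) - {x. snd x = True} = {x. snd x = False}" by auto
  have "measure_pmf.prob q (space (measure_pmf q) - {x. snd x = True}) = 1 - measure_pmf.prob q {x. snd x = True}"
    by (rule measure_pmf.prob_compl) simp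
  then have "obsE q False = 1 - obsE q True"
    unfolding obsE_def se .
  then show ?thesis by simp
qed

theorem theorem2:
  fixes q :: "(bool \<times> bool) pmf" and M' m' :: real
  assumes "obsE q True > 0" and "obsE q False > 0"
    and "max (obsCond q False) (obsCond q True) \<le> M'" and "M' \<le> 1"
    and "0 \<le> m'" and "m' \<le> min (obsCond q False) (obsCond q True)"
  shows "\<forall>\<delta>>0. \<exists>p :: (bool \<times> bool \<times> nat) pmf.
           finite (set_pmf p) \<and> positivity p \<and>
           \<bar>sensM p - M'\<bar> < \<delta> \<and> \<bar>sensm p - m'\<bar> < \<delta> \<and>
           (\<forall>d e. \<bar>pDE p d e - obsDE q d e\<bar> < \<delta>) \<and>
           \<bar>pCF p True - (pDE p True True + pE p False * sensM p)\<bar> < \<delta> \<and>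
           \<bar>pCF p False - (pDE p True False + pE p True * sensm p)\<bar> < \<delta>"
proof (intro allI impI)
  fix \<delta> :: real assume d: "\<delta> > 0"
  define a where "a = obsE q True"
  define b where "b = obsE q False"
  define r1 where "r1 = obsCond q True"
  define r0 where "r0 = obsCond q False"
  define \<epsilon> where "\<epsilon> = min (1/2) (\<delta>/2)"
  have ab: "a > 0" "b > 0" "a + b = 1" using assms obsE_sum[of q] by (auto simp: a_def b_def)
  have r: "0 \<le> m'" "m' \<le> r1" "m' \<le> r0" "r1 \<le> M'" "r0 \<le> M'" "M' \<le> 1"
    using assms by (auto simp: r1_def r0_def)
  have e: "0 < \<epsilon>" "\<epsilon> < 1" "\<epsilon> < \<delta>" using d by (auto simp: \<epsilon>_def)
  have q1: "obsDE q True True = a * r1" "obsDE q False True = a * (1 - r1)"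
  proof -
    have x: "a * r1 = obsDE q True True" unfolding r1_def obsCond_def a_def using ab(1) a_def by simp
    moreover have "obsDE q False True = a - obsDE q True True"
      using obsE_eq[of q True] unfolding a_def obsDE_def by simp
    ultimately show "obsDE q True True = a * r1" "obsDE q False True = a * (1 - r1)"
      by (simp_all add: algebra_simps)
  qed
  have q0: "obsDE q True False = b * r0" "obsDE q False False = b * (1 - r0)"
  proof -
    have x: "b * r0 = obsDE q True False" unfolding r0_def obsCond_def b_def using ab(2) b_def by simp
    moreover have "obsDE q False False = b - obsDE q True False"
      using obsE_eq[of q False] unfolding b_def obsDE_def by simp
    ultimately show "obsDE q True False = b * r0" "obsDE q False False = b * (1 - r0)"
      by (simp_all add: algebra_simps)
  qed
  define p where "p = pmf_of_list (L a b r1 r0 M' m' \<epsilon>)"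
  have C: "finite (set_pmf p) \<and> positivity p \<and> sensM p = M' \<and> sensm p = m' \<and>
    pDE p True True = a*(1-\<epsilon>)*r1 + b*\<epsilon>*M' \<and>
    pDE p False True = a*(1-\<epsilon>)*(1-r1) + b*\<epsilon>*(1-M') \<and>
    pDE p True False = a*\<epsilon>*m' + b*(1-\<epsilon>)*r0 \<and>
    pDE p False False = a*\<epsilon>*(1-m') + b*(1-\<epsilon>)*(1-r0) \<and>
    pE p True = a*(1-\<epsilon>) + b*\<epsilon> \<and> pE p False = a*\<epsilon> + b*(1-\<epsilon>) \<and>
    pCF p True = b*M' + a*r1 \<and> pCF p False = b*r0 + a*m'"
    unfolding p_def using core[OF ab r e(1,2)] by blast
  have Cs: "sensM p = M'" "sensm p = m'"
    "pDE p True True = a*(1-\<epsilon>)*r1 + b*\<epsilon>*M'"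
    "pDE p False True = a*(1-\<epsilon>)*(1-r1) + b*\<epsilon>*(1-M')"
    "pDE p True False = a*\<epsilon>*m' + b*(1-\<epsilon>)*r0"
    "pDE p False False = a*\<epsilon>*(1-m') + b*(1-\<epsilon>)*(1-r0)"
    "pE p True = a*(1-\<epsilon>) + b*\<epsilon>" "pE p False = a*\<epsilon> + b*(1-\<epsilon>)"
    "pCF p True = b*M' + a*r1" "pCF p False = b*r0 + a*m'" using C by blast+
  have r01: "0 \<le> r1" "r1 \<le> 1" "0 \<le> r0" "r0 \<le> 1" using r by auto
  have pb: "0 \<le> a*r1" "a*r1 \<le> a" "0 \<le> b*r0" "b*r0 \<le> b" "0 \<le> a*m'" "a*m' \<le> a"
     "0 \<le> b*M'" "b*M' \<le> b" "0 \<le> a*(1-r1)" "a*(1-r1) \<le> a" "0 \<le> b*(1-r0)" "b*(1-r0) \<le> b"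
     "0 \<le> a*(1-m')" "a*(1-m') \<le> a" "0 \<le> b*(1-M')" "b*(1-M') \<le> b"
     "0 \<le> a*(M'-r1)" "a*(M'-r1) \<le> a" "0 \<le> b*(r0-m')" "b*(r0-m') \<le> b"
    using ab r r01 by (auto intro: mult_nonneg_nonneg mult_left_le)
  have D1: "pDE p True True - obsDE q True True = \<epsilon> * (b*M' - a*r1)"
    by (simp add: Cs q1 algebra_simps)
  have D2: "pDE p False True - obsDE q False True = \<epsilon> * (b*(1-M') - a*(1-r1))"
    by (simp add: Cs q1 algebra_simps)
  have D3: "pDE p True False - obsDE q True False = \<epsilon> * (a*m' - b*r0)"
    by (simp add: Cs q0 algebra_simps)
  have D4: "pDE p False False - obsDE q False False = \<epsilon> * (a*(1-m') - b*(1-r0))"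
    by (simp add: Cs q0 algebra_simps)
  have D5: "pCF p True - (pDE p True True + pE p False * sensM p) = \<epsilon> * (- (a*(M'-r1)))"
    by (simp add: Cs algebra_simps)
  have D6: "pCF p False - (pDE p True False + pE p True * sensm p) = \<epsilon> * (b*(r0-m'))"
    by (simp add: Cs algebra_simps)
  have sp: "\<bar>\<epsilon> * X\<bar> < \<delta>" if "-1 \<le> X" "X \<le> 1" for X
    using smallprod[OF e(1) e(3)] that by (simp add: abs_le_iff)
  have A1: "\<bar>pDE p True True - obsDE q True True\<bar> < \<delta>"
    unfolding D1 by (rule sp) (use pb ab in linarith)+
  have A2: "\<bar>pDE p False True - obsDE q False True\<bar> < \<delta>"
    unfolding D2 by (rule sp) (use pb ab in linarith)+
  have A3: "\<bar>pDE p True False - obsDE q True False\<bar> < \<delta>"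
    unfolding D3 by (rule sp) (use pb ab in linarith)+
  have A4: "\<bar>pDE p False False - obsDE q False False\<bar> < \<delta>"
    unfolding D4 by (rule sp) (use pb ab in linarith)+
  have A5: "\<bar>pCF p True - (pDE p True True + pE p False * sensM p)\<bar> < \<delta>"
    unfolding D5 by (rule sp) (use pb ab in linarith)+
  have A6: "\<bar>pCF p False - (pDE p True False + pE p True * sensm p)\<bar> < \<delta>"
    unfolding D6 by (rule sp) (use pb ab in linarith)+
  have de: "\<forall>dd ee. \<bar>pDE p dd ee - obsDE q dd ee\<bar> < \<delta>"
  proof (intro allI)
    fix dd ee show "\<bar>pDE p dd ee - obsDE q dd ee\<bar> < \<delta>"
      using A1 A2 A3 A4 by (cases dd; cases ee) simp_all
  qed
  have "sensM p = M'" "sensm p = m'" "finite (set_pmf p)" "positivity p" using C by auto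
  then show "\<exists>p :: (bool \<times> bool \<times> nat) pmf.
           finite (set_pmf p) \<and> positivity p \<and>
           \<bar>sensM p - M'\<bar> < \<delta> \<and> \<bar>sensm p - m'\<bar> < \<delta> \<and>
           (\<forall>d e. \<bar>pDE p d e - obsDE q d e\<bar> < \<delta>) \<and>
           \<bar>pCF p True - (pDE p True True + pE p False * sensM p)\<bar> < \<delta> \<and>
           \<bar>pCF p False - (pDE p True False + pE p True * sensm p)\<bar> < \<delta>"
    using d de A5 A6 by (intro exI[of _ p]) simp
qed

end
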